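(* For all $n\ge 1$, \[ v_{n,i}=\begin{cases}(2n-i)\,v_{n-1,i}+(i-1)\,v_{n-1,i-1}, & 1\le i\le 2n,\\ (2n-1)!!, & i=2n+1,\end{cases} \] where $v_{m,i}=0$ whenever $i<1$ or $i>2m+1$, and $v_{0,1}=0$.
   Context: For $n\ge 0$, let $\mathcal{C}^*_{n,1}$ be the set of fillings, bijectively with the integers $1,\dots,2n+1$, of the three-row shape having one top-row cell in column $1$, middle-row cells in columns $1,\dots,n$ and bottom-row cells in columns $1,\dots,n$, such that entries increase from left to right along the middle row and from bottom to top within each column, with no condition among entries of the bottom row. (For $n=0$ the shape is not admissible since the top cell has no cell below it, so $\mathcal{C}^*_{0,1}=\emptyset$.) For $1\le i\le 2n+1$, $v_{n,i}$ is the number of elements of $\mathcal{C}^*_{n,1}$ whose top cell contains $i$. Here $(2n-1)!!=1\cdot3\cdots(2n-1)$. *)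

theory Defs
  imports Main
begin

text \<open>A filling of the three-row shape for a given n is encoded as a triple
  (t, ms, bs): t is the entry of the top cell (column 1), ms ! j is the entry of the
  middle-row cell in column j+1, bs ! j is the entry of the bottom-row cell in
  column j+1 (0-based list indices).\<close>

type_synonym filling = "nat \<times> nat list \<times> nat list"

definition C_star :: "nat \<Rightarrow> filling set" where
  "C_star n = {(t, ms, bs).
      n \<ge> 1 \<and> length ms = n \<and> length bs = n \<and>
      distinct (t # ms @ bs) \<and> set (t # ms @ bs) = {1..2*n+1} \<and>
      sorted_wrt (<) ms \<and>
      (\<forall>j<n. bs ! j < ms ! j) \<and>
      ms ! 0 < t}"

definition v :: "nat \<Rightarrow> nat \<Rightarrow> nat" where
  "v n i = card {F \<in> C_star n. fst F = i}"

definition odd_dfact :: "nat \<Rightarrow> nat" where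
  "odd_dfact n = (\<Prod>k=1..n. 2*k - 1)"

end

theory Submission
  imports Defs
begin

definition sh :: "nat \<Rightarrow> nat \<Rightarrow> nat" where "sh b x = (if x < b then x else Suc x)"
definition ush :: "nat \<Rightarrow> nat \<Rightarrow> nat" where "ush b x = (if x < b then x else x - 1)"
definition ins :: "nat \<Rightarrow> nat \<Rightarrow> filling \<Rightarrow> filling" where
  "ins m b F = (case F of (t, ms, bs) \<Rightarrow> (sh b t, map (sh b) ms @ [2*m+3], map (sh b) bs @ [b]))"
definition del :: "filling \<Rightarrow> nat \<times> filling" where
  "del G = (case G of (t, ms, bs) \<Rightarrow> (last bs, (ush (last bs) t, map (ush (last bs)) (butlast ms), map (ush (last bs)) (butlast bs))))"

lemma mem_C: "((t, ms, bs) \<in> C_star n) \<longleftrightarrow> (n \<ge> 1 \<and> length ms = n \<and> length bs = n \<and>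
      distinct (t # ms @ bs) \<and> set (t # ms @ bs) = {1..2*n+1} \<and>
      sorted_wrt (<) ms \<and>
      (\<forall>j<n. bs ! j < ms ! j) \<and>
      ms ! 0 < t)"
  by (simp add: C_star_def)

lemma finite_C: "finite (C_star n)"
proof -
  have "C_star n \<subseteq> {..2*n+1} \<times> {xs. set xs \<subseteq> {..2*n+1} \<and> length xs = n} \<times> {xs. set xs \<subseteq> {..2*n+1} \<and> length xs = n}"
    by (auto simp: C_star_def)
  moreover have "finite ({..2*n+1} \<times> {xs. set xs \<subseteq> {..2*n+1} \<and> length xs = n} \<times> {xs. set xs \<subseteq> {..2*n+1} \<and> length xs = n})"
    by (intro finite_cartesian_product finite_lists_length_eq) auto
  ultimately show ?thesis by (rule finite_subset)
qed

lemma sh_img: "b \<in> {1..2*m+2} \<Longrightarrow> sh b ` {1..2*m+1} = {1..2*m+2} - {b}"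
proof (rule set_eqI, rule iffI)
  fix x assume "b \<in> {1..2*m+2}" "x \<in> sh b ` {1..2*m+1}" then show "x \<in> {1..2*m+2} - {b}"
    by (auto simp: sh_def split: if_splits)
next
  fix x assume b: "b \<in> {1..2*m+2}" and x: "x \<in> {1..2*m+2} - {b}"
  show "x \<in> sh b ` {1..2*m+1}"
  proof (cases "x < b")
    case True then show ?thesis using b x by (intro image_eqI[of _ _ x]) (auto simp: sh_def)
  next
    case False then show ?thesis using b x by (intro image_eqI[of _ _ "x-1"]) (auto simp: sh_def)
  qed
qed

lemma ush_img: "b \<in> {1..2*m+2} \<Longrightarrow> ush b ` ({1..2*m+3} - {b, 2*m+3}) = {1..2*m+1}"
proof (rule set_eqI, rule iffI)
  fix x assume "b \<in> {1..2*m+2}" "x \<in> ush b ` ({1..2*m+3} - {b, 2*m+3})" then show "x \<in> {1..2*m+1}"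
    by (auto simp: ush_def split: if_splits)
next
  fix x assume b: "b \<in> {1..2*m+2}" and x: "x \<in> {1..2*m+1}"
  show "x \<in> ush b ` ({1..2*m+3} - {b, 2*m+3})"
  proof (cases "x < b")
    case True then show ?thesis using b x by (intro image_eqI[of _ _ x]) (auto simp: ush_def)
  next
    case False then show ?thesis using b x by (intro image_eqI[of _ _ "x+1"]) (auto simp: ush_def)
  qed
qed

lemma distinct_from_set: "set xs = {1..k} \<Longrightarrow> length xs = k \<Longrightarrow> distinct xs"
  by (rule card_distinct) simp

lemma ins_mem:
  assumes m: "m \<ge> 1" and F: "(t, ms, bs) \<in> C_star m" and b: "b \<in> {1..2*m+2}"
  shows "ins m b (t, ms, bs) \<in> C_star (Suc m)"
proof -
  from F have l: "length ms = m" "length bs = m" and st: "set (t # ms @ bs) = {1..2*m+1}"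
    and so: "sorted_wrt (<) ms" and bm: "\<forall>j<m. bs ! j < ms ! j" and t0: "ms ! 0 < t"
    by (auto simp: mem_C)
  have mono: "x < y \<Longrightarrow> sh b x < sh b y" for x y by (auto simp: sh_def)
  have le: "x \<le> 2*m+1 \<Longrightarrow> sh b x < 2*m+3" for x by (auto simp: sh_def)
  have setn: "set (sh b t # (map (sh b) ms @ [2*m+3]) @ map (sh b) bs @ [b]) = sh b ` set (t # ms @ bs) \<union> {b, 2*m+3}"
    by auto
  also have "\<dots> = {1..2*(Suc m)+1}" using st sh_img[OF b] b by auto
  finally have setn: "set (sh b t # (map (sh b) ms @ [2*m+3]) @ map (sh b) bs @ [b]) = {1..2*(Suc m)+1}" .
  have "\<forall>x\<in>set ms. x \<le> 2*m+1" using st by auto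
  then have so2: "sorted_wrt (<) (map (sh b) ms @ [2*m+3])"
  proof -
    have "sorted_wrt (<) (map (sh b) ms)" unfolding sorted_wrt_map
      using so by (rule sorted_wrt_mono_rel[rotated]) (use mono in auto)
    then show ?thesis using \<open>\<forall>x\<in>set ms. x \<le> 2*m+1\<close> le by (auto simp: sorted_wrt_append)
  qed
  have bm2: "\<forall>j<Suc m. (map (sh b) bs @ [b]) ! j < (map (sh b) ms @ [2*m+3]) ! j"
  proof (intro allI impI)
    fix j assume "j < Suc m"
    then consider "j < m" | "j = m" by linarith
    then show "(map (sh b) bs @ [b]) ! j < (map (sh b) ms @ [2*m+3]) ! j"
      by cases (use l bm mono b in \<open>auto simp: nth_append\<close>)
  qed
  have t2: "(map (sh b) ms @ [2*m+3]) ! 0 < sh b t" using m l t0 mono by (auto simp: nth_append)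
  have d: "distinct (sh b t # (map (sh b) ms @ [2*m+3]) @ map (sh b) bs @ [b])"
    by (rule distinct_from_set[OF setn]) (simp add: l)
  have e: "ins m b (t, ms, bs) = (sh b t, map (sh b) ms @ [2*m+3], map (sh b) bs @ [b])"
    by (simp add: ins_def)
  show ?thesis unfolding e mem_C using l setn so2 bm2 t2 d by simp
qed

lemma del_mem:
  assumes m: "m \<ge> 1" and G: "(t, ms0 @ [c], bs0 @ [b]) \<in> C_star (Suc m)" and ti: "t \<le> 2*m+2"
  shows "c = 2*m+3 \<and> b \<in> {1..2*m+2} \<and> b \<noteq> t \<and> (ush b t, map (ush b) ms0, map (ush b) bs0) \<in> C_star m"
proof -
  from G have l: "length ms0 = m" "length bs0 = m"
    and d: "distinct (t # (ms0 @ [c]) @ bs0 @ [b])"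
    and st: "set (t # (ms0 @ [c]) @ bs0 @ [b]) = {1..2*m+3}"
    and so: "sorted_wrt (<) (ms0 @ [c])" and bm: "\<forall>j<Suc m. (bs0 @ [b]) ! j < (ms0 @ [c]) ! j"
    and t0: "(ms0 @ [c]) ! 0 < t"
    by (auto simp: mem_C)
  have bm0: "\<forall>j<m. bs0 ! j < ms0 ! j"
  proof (intro allI impI)
    fix j assume "j < m" then show "bs0 ! j < ms0 ! j" using bm[rule_format, of j] l by (simp add: nth_append)
  qed
  have bc: "b < c" using bm[rule_format, of m] l by (simp add: nth_append)
  have so0: "sorted_wrt (<) ms0" and msc: "\<forall>x\<in>set ms0. x < c" using so by (auto simp: sorted_wrt_append)
  have cle: "c \<le> 2*m+3" using st by auto
  have "2*m+3 \<in> set (t # (ms0 @ [c]) @ bs0 @ [b])" using st by simp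
  moreover have "2*m+3 \<noteq> t" using ti by simp
  moreover have "2*m+3 \<notin> set ms0" using msc cle by fastforce
  moreover have "2*m+3 \<notin> set bs0"
  proof
    assume "2*m+3 \<in> set bs0"
    then obtain j where j: "j < m" "bs0 ! j = 2*m+3" using l by (auto simp: in_set_conv_nth)
    have "ms0 ! j \<in> set ms0" using j l by simp
    then show False using bm0 j msc cle by fastforce
  qed
  moreover have "2*m+3 \<noteq> b" using bc cle by simp
  ultimately have c: "c = 2*m+3" by auto
  have bset: "b \<in> {1..2*m+3}" using st by auto
  have bne: "b \<noteq> c" "b \<noteq> t" "b \<notin> set ms0" "b \<notin> set bs0" "t \<noteq> c" "c \<notin> set ms0" "c \<notin> set bs0"
    using d by auto
  have b: "b \<in> {1..2*m+2}" using bset bne c by auto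
  have s0: "set (t # ms0 @ bs0) = {1..2*m+3} - {b, 2*m+3}"
    using st bne c by auto
  have sn: "set (ush b t # map (ush b) ms0 @ map (ush b) bs0) = {1..2*m+1}"
  proof -
    have "set (ush b t # map (ush b) ms0 @ map (ush b) bs0) = ush b ` set (t # ms0 @ bs0)" by auto
    also have "\<dots> = ush b ` ({1..2*m+3} - {b, 2*m+3})" by (simp only: s0)
    also have "\<dots> = {1..2*m+1}" by (rule ush_img[OF b])
    finally show ?thesis .
  qed
  have dn: "distinct (ush b t # map (ush b) ms0 @ map (ush b) bs0)"
    by (rule distinct_from_set[OF sn]) (simp add: l)
  have mono: "x < y \<Longrightarrow> x \<noteq> b \<Longrightarrow> y \<noteq> b \<Longrightarrow> ush b x < ush b y" for x y
    by (auto simp: ush_def)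
  have son: "sorted_wrt (<) (map (ush b) ms0)" unfolding sorted_wrt_map
    using so0 by (rule sorted_wrt_mono_rel[rotated]) (metis mono bne(3))
  have bmn: "\<forall>j<m. map (ush b) bs0 ! j < map (ush b) ms0 ! j"
  proof (intro allI impI)
    fix j assume j: "j < m"
    then have "bs0 ! j \<in> set bs0" "ms0 ! j \<in> set ms0" using l by auto
    then have "bs0 ! j \<noteq> b" "ms0 ! j \<noteq> b" using bne by auto
    then have "ush b (bs0 ! j) < ush b (ms0 ! j)" using mono[OF bm0[rule_format, OF j]] by blast
    then show "map (ush b) bs0 ! j < map (ush b) ms0 ! j" using j l by simp
  qed
  have tn: "map (ush b) ms0 ! 0 < ush b t"
  proof -
    have "ms0 ! 0 \<in> set ms0" using l m by auto
    moreover have "ms0 ! 0 < t" using t0 l m by (simp add: nth_append)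
    ultimately have "ush b (ms0 ! 0) < ush b t" using mono bne by metis
    then show ?thesis using l m by simp
  qed
  show ?thesis using c b bne m l sn dn son bmn tn by (simp add: mem_C)
qed

lemma del_ins: "del (ins m b F) = (b, F)"
proof -
  have u: "ush b (sh b x) = x" for x by (simp add: sh_def ush_def)
  obtain t ms bs where "F = (t, ms, bs)" by (cases F) auto
  then show ?thesis by (simp add: ins_def del_def u map_idI)
qed

lemma del_facts:
  assumes m: "m \<ge> 1" and G: "G \<in> C_star (Suc m)" and ti: "fst G \<le> 2*m+2"
  shows "fst (del G) \<in> {1..2*m+2} \<and> fst (del G) \<noteq> fst G \<and> snd (del G) \<in> C_star m
     \<and> fst (snd (del G)) = ush (fst (del G)) (fst G) \<and> ins m (fst (del G)) (snd (del G)) = G"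
proof -
  obtain t ms bs where Gd: "G = (t, ms, bs)" by (cases G) auto
  have "length ms = Suc m" "length bs = Suc m" using G Gd by (auto simp: mem_C)
  then obtain ms0 c bs0 b where e: "ms = ms0 @ [c]" "bs = bs0 @ [b]"
    by (metis Zero_not_Suc length_0_conv rev_exhaust)
  have G': "(t, ms0 @ [c], bs0 @ [b]) \<in> C_star (Suc m)" using G Gd e by simp
  have tle: "t \<le> 2*m+2" using ti Gd by simp
  note D = del_mem[OF m G' tle]
  have dist: "distinct (t # (ms0 @ [c]) @ bs0 @ [b])" using G' by (simp only: mem_C)
  then have nb: "b \<notin> set ms0" "b \<notin> set bs0" by auto
  have u: "x \<noteq> b \<Longrightarrow> sh b (ush b x) = x" for x by (auto simp: sh_def ush_def)
  have dG: "del G = (b, (ush b t, map (ush b) ms0, map (ush b) bs0))" by (simp add: Gd e del_def)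
  have "ins m b (ush b t, map (ush b) ms0, map (ush b) bs0) = G"
    using D nb u by (auto simp: ins_def Gd e intro!: map_idI) (metis nb u)+
  then show ?thesis using D dG Gd ti by simp
qed

lemma recA:
  assumes m: "m \<ge> 1" and i: "1 \<le> i" "i \<le> 2*m+2"
  shows "v (Suc m) i = (2*m+2-i) * v m i + (i-1) * v m (i-1)"
proof -
  define A where "A j = {F \<in> C_star m. fst F = j}" for j
  define T where "T = {G \<in> C_star (Suc m). fst G = i}"
  define S where "S = ({1..<i} \<times> A (i-1)) \<union> ({i<..2*m+2} \<times> A i)"
  have fsti: "fst (ins m b F) = sh b (fst F)" for b F by (cases F) (simp add: ins_def)
  have bij: "bij_betw (\<lambda>(b,F). ins m b F) S T"
  proof (rule bij_betw_byWitness[where f' = del])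
    show "\<forall>a\<in>S. del (case a of (b, F) \<Rightarrow> ins m b F) = a" by (auto simp: del_ins)
  next
    show "\<forall>a'\<in>T. (case del a' of (b, F) \<Rightarrow> ins m b F) = a'"
    proof
      fix G assume "G \<in> T"
      then have "G \<in> C_star (Suc m)" "fst G \<le> 2*m+2" using i by (auto simp: T_def)
      from del_facts[OF m this] show "(case del G of (b, F) \<Rightarrow> ins m b F) = G"
        by (simp add: case_prod_beta)
    qed
  next
    show "(\<lambda>(b,F). ins m b F) ` S \<subseteq> T"
    proof (rule image_subsetI)
      fix p assume p: "p \<in> S"
      obtain b t ms bs where pd: "p = (b, t, ms, bs)" by (cases p) auto
      from p pd have bF: "(b, t, ms, bs) \<in> S" by simp
      then have b: "b \<in> {1..2*m+2}" and F: "(t, ms, bs) \<in> C_star m" using i by (auto simp: S_def A_def)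
      have "sh b t = i" using bF i by (auto simp: S_def A_def sh_def)
      then show "(case p of (b, F) \<Rightarrow> ins m b F) \<in> T" unfolding pd using ins_mem[OF m F b] fsti[of b "(t,ms,bs)"]
        by (simp add: T_def)
    qed
  next
    show "del ` T \<subseteq> S"
    proof
      fix x assume "x \<in> del ` T"
      then obtain G where G: "G \<in> T" and x: "x = del G" by auto
      then have "G \<in> C_star (Suc m)" "fst G \<le> 2*m+2" "fst G = i" using i by (auto simp: T_def)
      from del_facts[OF m this(1,2)] this(3)
      show "x \<in> S" unfolding x S_def A_def
        by (cases "del G") (auto simp: ush_def)
    qed
  qed
  have fA: "finite (A j)" for j using finite_C[of m] by (simp add: A_def)
  have "card T = card S" using bij by (simp add: bij_betw_same_card)
  also have "card S = card ({1..<i} \<times> A (i-1)) + card ({i<..2*m+2} \<times> A i)"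
    unfolding S_def by (rule card_Un_disjoint) (auto simp: fA)
  also have "\<dots> = (i-1) * card (A (i-1)) + (2*m+2-i) * card (A i)"
    by (simp add: card_cartesian_product)
  finally show ?thesis by (simp add: v_def T_def A_def)
qed

definition sw :: "nat \<Rightarrow> nat \<Rightarrow> nat" where
  "sw n x = (if x = 2*n then 2*n+1 else if x = 2*n+1 then 2*n else x)"
definition swF :: "nat \<Rightarrow> filling \<Rightarrow> filling" where
  "swF n F = (case F of (t, ms, bs) \<Rightarrow> (sw n t, map (sw n) ms, map (sw n) bs))"

lemma sw_sw: "sw n (sw n x) = x" by (simp add: sw_def)

lemma swF_swF: "swF n (swF n F) = F"
  by (cases F) (simp add: swF_def sw_sw map_idI)

lemma sw_img: assumes n1: "n \<ge> 1" shows "sw n ` {1..2*n+1} = {1..2*n+1}"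
proof (rule set_eqI, rule iffI)
  fix x assume "x \<in> sw n ` {1..2*n+1}" then show "x \<in> {1..2*n+1}" using n1 by (auto simp: sw_def)
next
  fix x assume x: "x \<in> {1..2*n+1}"
  have "sw n x \<in> {1..2*n+1}" using x n1 by (auto simp: sw_def)
  then show "x \<in> sw n ` {1..2*n+1}" by (intro image_eqI[of _ _ "sw n x"]) (simp_all add: sw_sw)
qed

lemma swF_mem:
  assumes n: "n \<ge> 2" and F: "(t, ms, bs) \<in> C_star n" and t: "t = 2*n \<or> t = 2*n+1"
  shows "swF n (t, ms, bs) \<in> C_star n"
proof -
  from F have l: "length ms = n" "length bs = n" and st: "set (t # ms @ bs) = {1..2*n+1}"
    and d: "distinct (t # ms @ bs)"
    and so: "sorted_wrt (<) ms" and bm: "\<forall>j<n. bs ! j < ms ! j" and t0: "ms ! 0 < t"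
    by (auto simp: mem_C)
  have mono: "x < y \<Longrightarrow> y \<le> 2*n+1 \<Longrightarrow> x \<noteq> t \<Longrightarrow> y \<noteq> t \<Longrightarrow> sw n x < sw n y" for x y
    using t by (auto simp: sw_def)
  have sn: "set (sw n t # map (sw n) ms @ map (sw n) bs) = {1..2*n+1}"
  proof -
    have "set (sw n t # map (sw n) ms @ map (sw n) bs) = sw n ` set (t # ms @ bs)" by auto
    also have "\<dots> = sw n ` {1..2*n+1}" by (simp only: st)
    also have "\<dots> = {1..2*n+1}" by (rule sw_img) (use n in simp)
    finally show ?thesis .
  qed
  have dn: "distinct (sw n t # map (sw n) ms @ map (sw n) bs)"
    by (rule distinct_from_set[OF sn]) (simp add: l)
  have inms: "x \<in> set ms \<Longrightarrow> x \<noteq> t \<and> x \<le> 2*n+1" for x using d st by auto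
  have inbs: "x \<in> set bs \<Longrightarrow> x \<noteq> t \<and> x \<le> 2*n+1" for x using d st by auto
  have son: "sorted_wrt (<) (map (sw n) ms)" unfolding sorted_wrt_map
    using so by (rule sorted_wrt_mono_rel[rotated]) (metis mono inms)
  have bmn: "\<forall>j<n. map (sw n) bs ! j < map (sw n) ms ! j"
  proof (intro allI impI)
    fix j assume j: "j < n"
    then have "bs ! j \<in> set bs" "ms ! j \<in> set ms" using l by auto
    then have "sw n (bs ! j) < sw n (ms ! j)" using mono[OF bm[rule_format, OF j]] inms inbs by blast
    then show "map (sw n) bs ! j < map (sw n) ms ! j" using j l by simp
  qed
  have m0: "ms ! 0 < 2*n"
  proof -
    have "ms ! 0 < ms ! 1" using sorted_wrt_nth_less[OF so, of 0 1] l n by simp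
    moreover have "ms ! 1 \<in> set ms" using l n by simp
    ultimately show ?thesis using inms t t0 by fastforce
  qed
  have tn: "map (sw n) ms ! 0 < sw n t"
    using m0 t l n by (auto simp: sw_def)
  show ?thesis unfolding swF_def using l sn dn son bmn tn n by (simp add: mem_C)
qed

lemma swap_v:
  assumes n: "n \<ge> 2"
  shows "v n (2*n+1) = v n (2*n)"
proof -
  have fs: "fst (swF n F) = sw n (fst F)" for F by (cases F) (simp add: swF_def)
  have "bij_betw (swF n) {F \<in> C_star n. fst F = 2*n+1} {F \<in> C_star n. fst F = 2*n}"
  proof (rule bij_betw_byWitness[where f' = "swF n"])
    show "\<forall>a\<in>{F \<in> C_star n. fst F = 2 * n + 1}. swF n (swF n a) = a" by (simp add: swF_swF)
    show "\<forall>a'\<in>{F \<in> C_star n. fst F = 2 * n}. swF n (swF n a') = a'" by (simp add: swF_swF)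
    show "swF n ` {F \<in> C_star n. fst F = 2 * n + 1} \<subseteq> {F \<in> C_star n. fst F = 2 * n}"
    proof (rule image_subsetI)
      fix F assume "F \<in> {F \<in> C_star n. fst F = 2 * n + 1}"
      moreover obtain t ms bs where "F = (t, ms, bs)" by (cases F) auto
      ultimately show "swF n F \<in> {F \<in> C_star n. fst F = 2 * n}"
        using swF_mem[OF n, of t ms bs] fs[of F] by (auto simp: sw_def)
    qed
    show "swF n ` {F \<in> C_star n. fst F = 2 * n} \<subseteq> {F \<in> C_star n. fst F = 2 * n + 1}"
    proof (rule image_subsetI)
      fix F assume "F \<in> {F \<in> C_star n. fst F = 2 * n}"
      moreover obtain t ms bs where "F = (t, ms, bs)" by (cases F) auto
      ultimately show "swF n F \<in> {F \<in> C_star n. fst F = 2 * n + 1}"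
        using swF_mem[OF n, of t ms bs] fs[of F] by (auto simp: sw_def)
    qed
  qed
  then show ?thesis unfolding v_def by (rule bij_betw_same_card)
qed

lemma C1: "(t, ms, bs) \<in> C_star 1 \<Longrightarrow> t = 3 \<and> ms = [2] \<and> bs = [1]"
proof -
  assume F: "(t, ms, bs) \<in> C_star 1"
  then have l: "length ms = 1" "length bs = 1" and st: "set (t # ms @ bs) = {1..3}"
    and bm: "bs ! 0 < ms ! 0" and t0: "ms ! 0 < t" by (auto simp: mem_C)
  obtain a c where e: "ms = [a]" "bs = [c]" using l by (metis One_nat_def length_0_conv length_Suc_conv)
  have "c \<ge> 1" "t \<le> 3" using st e by auto
  then show ?thesis using bm t0 e by auto
qed

lemma v1: "v 1 i = (if i = 3 then 1 else 0)"
proof -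
  have e3: "{3, 2, Suc 0} = {Suc 0..3::nat}" by auto
  have mem3: "(3::nat, [2::nat], [1::nat]) \<in> C_star 1" by (simp add: mem_C, rule e3)
  have "{F \<in> C_star 1. fst F = i} = (if i = 3 then {(3, [2], [1])} else {})"
  proof (rule set_eqI)
    fix F :: filling
    obtain t ms bs where Fd: "F = (t, ms, bs)" by (cases F) auto
    show "F \<in> {F \<in> C_star 1. fst F = i} \<longleftrightarrow> F \<in> (if i = 3 then {(3, [2], [1])} else {})"
      using C1[of t ms bs] mem3 unfolding Fd by auto
  qed
  then show ?thesis by (simp add: v_def)
qed

lemma v1': "v (Suc 0) i = (if i = 3 then 1 else 0)" using v1 by simp

lemma v0: "v 0 i = 0" by (simp add: v_def C_star_def)

lemma oddB: "n \<ge> 1 \<Longrightarrow> v n (2*n+1) = odd_dfact n"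
proof (induction n)
  case 0 then show ?case by simp
next
  case (Suc k)
  show ?case
  proof (cases "k = 0")
    case True then show ?thesis by (simp add: v1' odd_dfact_def)
  next
    case False
    then have k: "k \<ge> 1" by simp
    have "v (Suc k) (2 * Suc k + 1) = v (Suc k) (2 * Suc k)" by (rule swap_v) (use k in simp)
    also have "\<dots> = (2*k+1) * v k (2*k+1)" using recA[OF k, of "2*k+2"] by simp
    also have "\<dots> = (2*k+1) * odd_dfact k" using Suc.IH k by simp
    also have "\<dots> = odd_dfact (Suc k)" by (simp add: odd_dfact_def)
    finally show ?thesis .
  qed
qed

theorem lemma19:
  fixes n :: nat
  assumes "n \<ge> 1"
  shows "(\<forall>i. 1 \<le> i \<and> i \<le> 2*n \<longrightarrow>
            v n i = (2*n - i) * v (n-1) i + (i-1) * v (n-1) (i-1))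
         \<and> v n (2*n+1) = odd_dfact n"
proof (intro conjI allI impI)
  show "v n (2*n+1) = odd_dfact n" using oddB assms by simp
next
  fix i assume i: "1 \<le> i \<and> i \<le> 2*n"
  show "v n i = (2*n - i) * v (n-1) i + (i-1) * v (n-1) (i-1)"
  proof (cases "n = 1")
    case True then show ?thesis using i by (simp add: v1' v0)
  next
    case False
    then obtain m where m: "n = Suc m" "m \<ge> 1" using assms by (cases n) auto
    show ?thesis using recA[OF m(2), of i] i m by simp
  qed
qed

end
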